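(* Let $\phi_T(t)=\frac{\tanh t}{t}$ (the hyperbolic-tangent characteristic function), whose Khintchine pair is $[0,m_T]$ with $m_T(dx)=\frac12\frac{|x|}{1+x^2}\frac{e^{-\pi|x|/4}}{\cosh(\pi|x|/4)}dx$. Its free analogue $\tilde\phi_T$ has Voiculescu transform $$V_{\tilde\phi_T}(it)=it\big[\ln(t/2)-\beta(t/2)-\psi(t/2)\big]=it\big[\ln(t/4)-\psi(t/4+1/2)\big],\qquad t>0.$$ Consequently, $2\psi(2s)-\psi(s)-\psi(s+1/2)=2\ln2$ for all $s>0$.
   Context: $\psi=\Gamma'/\Gamma$ is the digamma function and $\beta(x):=\sum_{k=0}^\infty\frac{(-1)^k}{x+k}=\frac12[\psi(\frac{x+1}{2})-\psi(\frac x2)]$ for $x>0$. For an infinitely divisible characteristic function $\phi$ with Khintchine exponent $\log\phi$ (continuous logarithm, $\log\phi(0)=0$), its free analogue $\tilde\phi$ is the $\boxplus$-infinitely divisible probability measure whose Voiculescu transform satisfies $V_{\tilde\phi}(it)=it^2\int_0^\infty\overline{\log\phi(s)}e^{-ts}ds$, $t>0$; if $\phi$ has Khintchine pair $[0,m]$ with $m$ symmetric, this equals $-it\int_{\mathbb{R}}\frac{1+x^2}{t^2+x^2}m(dx)$. *)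

theory Defs
  imports "HOL-Analysis.Analysis"
begin

definition phiT :: "real \<Rightarrow> real" where
  "phiT t = (if t = 0 then 1 else tanh t / t)"

definition betaF :: "real \<Rightarrow> real" where
  "betaF x = (\<Sum>k. (-1) ^ k / (x + real k))"

text \<open>Voiculescu transform of the free analogue of a characteristic function with
  Khintchine exponent L, evaluated at the point i t:
  V(i t) = i t^2 * integral_0^infinity conj(L s) e^(-t s) ds.\<close>
definition V_free :: "(real \<Rightarrow> complex) \<Rightarrow> real \<Rightarrow> complex" where
  "V_free L t = \<i> * complex_of_real (t ^ 2) *
     (LINT s:{0<..}|lborel. cnj (L s) * complex_of_real (exp (- (t * s))))"

end

theory Submission
  imports Defs "HOL-Probability.Sinc_Integral"
begin


lemma sum_2m_split:
  fixes f :: "nat \<Rightarrow> real"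
  shows "(\<Sum>n<2*m. f n) = (\<Sum>k<m. f (2*k)) + (\<Sum>k<m. f (2*k+1))"
  by (induction m) (simp_all add: numeral_2_eq_2)

lemma Digamma_dup:
  fixes y :: real assumes y: "y > 0"
  shows "2 * Digamma (2 * y) - Digamma y - Digamma (y + 1 / 2) = 2 * ln 2"
proof -
  define Aq where "Aq = (\<lambda>z::real. \<lambda>m::nat. ln (real m) - (\<Sum>n<m. inverse (z + of_nat n)))"
  have L1: "(Aq (2*y)) \<longlonglongrightarrow> Digamma (2*y)" unfolding Aq_def
    using Digamma_LIMSEQ[of "2*y"] y by simp
  have L2: "(Aq y) \<longlonglongrightarrow> Digamma y" unfolding Aq_def
    using Digamma_LIMSEQ[of "y"] y by simp
  have L3: "(Aq (y+1/2)) \<longlonglongrightarrow> Digamma (y+1/2)" unfolding Aq_def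
    using Digamma_LIMSEQ[of "y+1/2"] y by simp
  have "strict_mono (\<lambda>m::nat. 2*m)" by (simp add: strict_mono_def)
  from LIMSEQ_subseq_LIMSEQ[OF L1 this]
  have L1': "(\<lambda>m. Aq (2*y) (2*m)) \<longlonglongrightarrow> Digamma (2*y)" by (simp add: o_def)
  have lim: "(\<lambda>m. 2 * Aq (2*y) (2*m) - Aq y m - Aq (y+1/2) m) \<longlonglongrightarrow> 2 * Digamma (2 * y) - Digamma y - Digamma (y + 1 / 2)"
    by (intro tendsto_intros L1' L2 L3)
  have ev: "\<forall>\<^sub>F m in sequentially. 2 * Aq (2*y) (2*m) - Aq y m - Aq (y+1/2) m = 2 * ln 2"
    using eventually_gt_at_top[of "0::nat"]
  proof eventually_elim
    case (elim m)
    have e1: "inverse (2*y + real (2*k)) = inverse (y + real k) / 2" for k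
      using y by (simp add: field_simps)
    have e2: "inverse (2*y + real (2*k+1)) = inverse (y + 1/2 + real k) / 2" for k
    proof -
      have "2*y + real (2*k+1) = 2 * (y + 1/2 + real k)" by simp
      moreover have "y + 1/2 + real k > 0" using y by simp
      ultimately show ?thesis by (simp add: inverse_eq_divide)
    qed
    have "(\<Sum>n<2*m. inverse (2*y + of_nat n)) = (\<Sum>k<m. inverse (y + real k)) / 2 + (\<Sum>k<m. inverse (y + 1/2 + real k)) / 2"
      by (subst sum_2m_split) (simp only: e1 e2 sum_divide_distrib)
    moreover have "ln (real (2*m)) = ln 2 + ln (real m)" using elim by (simp add: ln_mult)
    ultimately show ?case unfolding Aq_def by simp
  qed
  have "(\<lambda>m. 2 * Aq (2*y) (2*m) - Aq y m - Aq (y+1/2) m) \<longlonglongrightarrow> 2 * ln 2"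
    by (rule Lim_transform_eventually[OF tendsto_const]) (use ev in \<open>simp add: eq_commute\<close>)
  from LIMSEQ_unique[OF lim this] show ?thesis .
qed



lemma Digamma_sums:
  fixes z :: real assumes "z > 0"
  shows "(\<lambda>k. inverse (real (Suc k)) - inverse (z + real k)) sums (Digamma z + euler_mascheroni)"
proof -
  have "summable (\<lambda>k. inverse (real (Suc k)) - inverse (z + real k))"
    using summable_Digamma[of z] assms by simp
  then show ?thesis by (simp add: Digamma_def summable_sums)
qed

lemma Digamma_diff_sums:
  fixes a b :: real assumes "a > 0" "b > 0"
  shows "(\<lambda>k. inverse (a + real k) - inverse (b + real k)) sums (Digamma b - Digamma a)"
proof -
  have "(\<lambda>k. (inverse (real (Suc k)) - inverse (b + real k)) - (inverse (real (Suc k)) - inverse (a + real k)))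
        sums ((Digamma b + euler_mascheroni) - (Digamma a + euler_mascheroni))"
    by (intro sums_diff Digamma_sums assms)
  then show ?thesis by simp
qed

lemma betaF_Digamma:
  fixes x :: real assumes x: "x > 0"
  shows "betaF x = (Digamma ((x+1)/2) - Digamma (x/2)) / 2"
proof -
  let ?a = "\<lambda>k. inverse (x + real k)"
  have sm: "summable (\<lambda>k. (-1)^k * ?a k)"
  proof (rule summable_Leibniz'(1))
    show "?a \<longlonglongrightarrow> 0"
      by (intro tendsto_inverse_0_at_top filterlim_tendsto_add_at_top[OF tendsto_const] filterlim_real_sequentially)
    show "0 \<le> ?a n" for n using x by simp
    show "?a (Suc n) \<le> ?a n" for n using x by (simp add: le_imp_inverse_le)
  qed
  have eq: "(\<lambda>k. (-1)^k / (x + real k)) = (\<lambda>k. (-1)^k * ?a k)" by (simp add: divide_inverse)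
  have s1: "(\<lambda>k. (-1)^k / (x + real k)) sums betaF x"
    unfolding betaF_def eq using sm by (simp add: summable_sums)
  have m1: "(-1::real)^(n+n) = 1" for n by (induct n) auto
  from sums_group[OF s1, of 2]
  have s2: "(\<lambda>n. ?a (2*n) - ?a (2*n+1)) sums betaF x"
    by (simp add: mult.commute divide_inverse numeral_2_eq_2 m1)
  have "(\<lambda>k. inverse (x/2 + real k) - inverse ((x+1)/2 + real k)) sums (Digamma ((x+1)/2) - Digamma (x/2))"
    using x by (intro Digamma_diff_sums) auto
  then have s3: "(\<lambda>k. (inverse (x/2 + real k) - inverse ((x+1)/2 + real k)) / 2) sums ((Digamma ((x+1)/2) - Digamma (x/2)) / 2)"
    by (rule sums_divide)
  have e: "?a (2*n) - ?a (2*n+1) = (inverse (x/2 + real n) - inverse ((x+1)/2 + real n)) / 2" for n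
  proof -
    have "x + real (2*n) = 2 * (x/2 + real n)" "x + real (2*n+1) = 2 * ((x+1)/2 + real n)" by simp_all
    then show ?thesis by (simp add: field_simps)
  qed
  have "(\<lambda>k. (inverse (x/2 + real k) - inverse ((x+1)/2 + real k)) / 2) sums betaF x"
    using s2 by (simp only: e)
  from sums_unique2[OF this s3] show ?thesis .
qed

lemma phiT_pos: "phiT y > 0"
  unfolding phiT_def
  by (cases "y > 0"; cases "y < 0") (auto simp: divide_pos_pos divide_neg_neg)

lemma L_real:
  fixes L :: "real \<Rightarrow> complex"
  assumes L_cont: "continuous_on UNIV L"
    and L_0: "L 0 = 0"
    and L_log: "\<And>y. exp (L y) = complex_of_real (phiT y)"
  shows "L y = complex_of_real (ln (phiT y))"
proof -
  have re: "Re (L z) = ln (phiT z)" for z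
  proof -
    have "exp (Re (L z)) = norm (exp (L z))" by (simp add: norm_exp_eq_Re)
    also have "\<dots> = phiT z" using L_log[of z] phiT_pos[of z] by simp
    finally show ?thesis using phiT_pos[of z] by (metis ln_exp)
  qed
  have im: "\<exists>n::int. Im (L z) = of_int (2*n) * pi" for z
  proof -
    have "exp (L z - complex_of_real (ln (phiT z))) = 1"
      using L_log[of z] phiT_pos[of z] by (simp add: exp_diff exp_of_real)
    then show ?thesis by (simp add: exp_eq_1)
  qed
  define f where "f = (\<lambda>z. Im (L z) / (2*pi))"
  have fint: "f z \<in> \<int>" for z
  proof -
    obtain n :: int where "Im (L z) = of_int (2*n) * pi" using im by blast
    then have "f z = of_int n" unfolding f_def by simp
    then show ?thesis by simp
  qed
  have "continuous_on UNIV f" unfolding f_def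
    by (intro continuous_intros continuous_on_compose2[OF continuous_on_Im L_cont]) auto
  have "f constant_on UNIV"
  proof (rule continuous_discrete_range_constant[OF connected_UNIV \<open>continuous_on UNIV f\<close>])
    fix x :: real assume "x \<in> UNIV"
    show "\<exists>e>0. \<forall>y. y \<in> UNIV \<and> f y \<noteq> f x \<longrightarrow> e \<le> norm (f y - f x)"
    proof (intro exI[of _ 1] conjI allI impI)
      fix y assume "y \<in> UNIV \<and> f y \<noteq> f x"
      then show "1 \<le> norm (f y - f x)"
        using fint[of x] fint[of y] by (auto elim!: Ints_cases simp: of_int_diff[symmetric] simp del: of_int_diff)
    qed simp
  qed
  then have "f y = f 0" by (auto simp: constant_on_def)
  then have "Im (L y) = 0" using L_0 by (simp add: f_def)
  then show ?thesis using re[of y] by (simp add: complex_eq_iff)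
qed



lemma gamma_lborel:
  fixes x :: real assumes x: "x > 0"
  shows "has_bochner_integral lborel (\<lambda>y. indicator {0<..} y * (y powr (x - 1) / exp y)) (Gamma x)"
proof -
  have hi: "((\<lambda>y. y powr (x-1) / exp y) has_integral Gamma x) {0..}"
    by (rule Gamma_integral_real[OF x])
  have eq: "(\<lambda>y. if y \<in> {0..} then y powr (x-1) / exp y else 0) = (\<lambda>y. indicator {0<..} y * (y powr (x - 1) / exp y))"
    by (auto simp: indicator_def fun_eq_iff)
  have hU: "((\<lambda>y. indicator {0<..} y * (y powr (x - 1) / exp y)) has_integral Gamma x) UNIV"
    using has_integral_restrict_UNIV[of "{0..}" "\<lambda>y. y powr (x-1) / exp y" "Gamma x"] hi eq by simp
  have meas: "(\<lambda>y. indicator {0<..} y * (y powr (x - 1) / exp y)) \<in> borel_measurable borel"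
    by measurable
  have nn: "integral\<^sup>N lborel (\<lambda>y. ennreal (indicator {0<..} y * (y powr (x - 1) / exp y))) = ennreal (Gamma x)"
    by (rule nn_integral_has_integral_lborel[OF meas _ hU]) (auto simp: indicator_def)
  show ?thesis
    by (rule has_bochner_integral_nn_integral[OF _ _ _ nn])
       (use meas x in \<open>auto simp: indicator_def Gamma_real_pos less_imp_le\<close>)
qed



lemma powr_quot_bounds:
  fixes y h :: real assumes y: "y > 0" and h: "h > 0"
  shows "ln y \<le> (y powr h - 1) / h" "(y powr h - 1) / h \<le> ln y * y powr h"
proof -
  have p: "y powr h = exp (h * ln y)" using y by (simp add: powr_def)
  have "1 + h * ln y \<le> exp (h * ln y)" by (rule exp_ge_add_one_self)
  then show "ln y \<le> (y powr h - 1) / h" using h by (simp add: p field_simps)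
  have "1 + (- (h * ln y)) \<le> exp (- (h * ln y))" by (rule exp_ge_add_one_self)
  then have "exp (h * ln y) * (1 - h * ln y) \<le> exp (h * ln y) * exp (- (h * ln y))"
    by (intro mult_left_mono) auto
  then have "exp (h * ln y) - 1 \<le> h * ln y * exp (h * ln y)"
    by (simp add: exp_minus field_simps)
  then show "(y powr h - 1) / h \<le> ln y * y powr h" using h by (simp add: p field_simps)
qed

lemma neg_ln_le: fixes y :: real assumes "y > 0" shows "- ln y \<le> 2 * y powr (-1/2)"
proof -
  have "ln (y powr (-1/2)) \<le> y powr (-1/2) - 1" using assms by (intro ln_le_minus_one) simp
  moreover have "ln (y powr (-1/2)) = - ln y / 2" using assms by (simp add: ln_powr)
  ultimately show ?thesis by simp
qed

lemma powr_quot_bound: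
  fixes y h :: real assumes y: "y > 0" and h: "h > 0" "h \<le> 1"
  shows "\<bar>(y powr h - 1) / h\<bar> \<le> 2 * y powr (-1/2) + y powr 2"
proof (cases "y \<le> 1")
  case True
  have "y powr h \<le> 1" using powr_mono2[of h y 1] True y h by simp
  moreover have "ln y \<le> 0" using True y by simp
  ultimately have "ln y * y powr h \<le> 0" using y by (simp add: mult_nonpos_nonneg)
  then have "\<bar>(y powr h - 1) / h\<bar> \<le> - ln y" using powr_quot_bounds[OF y h(1)] by linarith
  also have "\<dots> \<le> 2 * y powr (-1/2)" by (rule neg_ln_le[OF y])
  finally have A: "\<bar>(y powr h - 1) / h\<bar> \<le> 2 * y powr (-1/2)" .
  have "0 \<le> y powr 2" by simp
  then show ?thesis using A by linarith
next
  case False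
  have "y powr h \<le> y powr 1" using False h by (intro powr_mono) auto
  then have yh: "y powr h \<le> y" using y by simp
  have l0: "ln y \<ge> 0" using False by simp
  have "ln y * y powr h \<le> y * y"
    using yh l0 ln_le_minus_one[OF y] by (intro mult_mono) auto
  then have "\<bar>(y powr h - 1) / h\<bar> \<le> y * y" using powr_quot_bounds[OF y h(1)] l0 by linarith
  also have "y * y = y powr 2" using y by (simp add: power2_eq_square powr_numeral[symmetric])
  finally have A: "\<bar>(y powr h - 1) / h\<bar> \<le> y powr 2" .
  have "0 \<le> y powr (-1/2)" by simp
  then show ?thesis using A by linarith
qed

lemma ln_exp_integral1:
  "has_bochner_integral lborel (\<lambda>y::real. indicator {0<..} y * (ln y * exp (-y))) (- euler_mascheroni)"
proof -
  define E where "E = (\<lambda>y::real. indicator {0<..} y :: real)"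
  define h where "h = (\<lambda>n::nat. inverse (real (Suc n)))"
  have hpos: "h n > 0" "h n \<le> 1" for n by (auto simp: h_def field_simps)
  have hpos1: "0 < 1 + h n" for n using hpos(1)[of n] by simp
  define s where "s = (\<lambda>n y. (E y * (y powr ((1 + h n) - 1) / exp y) - E y * (y powr (1 - 1) / exp y)) / h n)"
  define f where "f = (\<lambda>y. E y * (ln y * exp (-y)))"
  define w where "w = (\<lambda>y. 2 * (E y * (y powr (1/2 - 1) / exp y)) + E y * (y powr (3 - 1) / exp y))"
  have sI: "has_bochner_integral lborel (s n) ((Gamma (1 + h n) - Gamma 1) / h n)" for n
    unfolding s_def E_def
    by (intro has_bochner_integral_divide_zero has_bochner_integral_diff gamma_lborel) (use hpos1 in auto)
  have w1: "integrable lborel (\<lambda>y. indicator {0<..} y * (y powr (1/2 - 1) / exp y) :: real)"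
    by (rule integrable.intros[OF gamma_lborel]) simp
  have w2: "integrable lborel (\<lambda>y. indicator {0<..} y * (y powr (3 - 1) / exp y) :: real)"
    by (rule integrable.intros[OF gamma_lborel]) simp
  have wI: "integrable lborel w"
    unfolding w_def E_def using Bochner_Integration.integrable_add[OF integrable_mult_right[of 2, OF w1] w2] by simp
  have s_eq: "s n y = E y * ((y powr h n - 1) / h n * exp (-y))" for n y
    by (auto simp: s_def E_def indicator_def exp_minus field_simps)
  have bound: "norm (s n y) \<le> w y" for n y
  proof (cases "y > 0")
    case True
    have "norm (s n y) = \<bar>(y powr h n - 1) / h n\<bar> * exp (-y)" using True by (simp add: s_eq E_def abs_mult)
    also have "\<dots> \<le> (2 * y powr (-1/2) + y powr 2) * exp (-y)"
      by (intro mult_right_mono powr_quot_bound True hpos) auto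
    also have "\<dots> = w y" using True by (simp add: w_def E_def exp_minus field_simps)
    finally show ?thesis .
  qed (auto simp: s_eq E_def w_def)
  have lim: "(\<lambda>n. s n y) \<longlonglongrightarrow> f y" for y
  proof (cases "y > 0")
    case True
    have h0: "h \<longlonglongrightarrow> 0" unfolding h_def by (rule LIMSEQ_inverse_real_of_nat)
    have "(\<lambda>n. ln y * y powr h n) \<longlonglongrightarrow> ln y * y powr 0"
      using True by (intro tendsto_intros h0) auto
    then have up: "(\<lambda>n. ln y * y powr h n) \<longlonglongrightarrow> ln y" using True by simp
    have "(\<lambda>n. (y powr h n - 1) / h n) \<longlonglongrightarrow> ln y"
      by (rule real_tendsto_sandwich[OF _ _ tendsto_const up])
         (use powr_quot_bounds[OF True hpos(1)] in auto)
    then have "(\<lambda>n. (y powr h n - 1) / h n * exp (-y)) \<longlonglongrightarrow> ln y * exp (-y)"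
      by (intro tendsto_intros)
    then show ?thesis using True by (simp add: s_eq f_def E_def)
  qed (simp add: s_eq f_def E_def)
  have fm: "f \<in> borel_measurable lborel" unfolding f_def E_def by measurable
  have sm: "s n \<in> borel_measurable lborel" for n using sI[of n] by (auto dest: has_bochner_integral_integrable)
  have fint: "integrable lborel f"
    by (rule integrable_dominated_convergence[where s=s, OF fm sm wI]) (use lim bound in auto)
  have L1: "(\<lambda>n. integral\<^sup>L lborel (s n)) \<longlonglongrightarrow> integral\<^sup>L lborel f"
    by (rule integral_dominated_convergence[where s=s, OF fm sm wI]) (use lim bound in auto)
  have "(Gamma has_field_derivative Gamma 1 * Digamma 1) (at (1::real))"
    by (rule has_field_derivative_Gamma) (auto simp: nonpos_Ints_def)
  then have "(\<lambda>d. (Gamma (1 + d) - Gamma 1) / d) \<midarrow>0\<rightarrow> (- euler_mascheroni :: real)"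
    by (simp add: DERIV_def)
  then have "\<forall>S. (\<forall>n. S n \<noteq> 0) \<and> S \<longlonglongrightarrow> 0 \<longrightarrow> (\<lambda>n. (Gamma (1 + S n) - Gamma 1) / S n) \<longlonglongrightarrow> (- euler_mascheroni :: real)"
    by (subst LIMSEQ_SEQ_conv)
  moreover have "\<forall>n. h n \<noteq> 0" using hpos(1) by (metis less_irrefl)
  moreover have "h \<longlonglongrightarrow> 0" unfolding h_def by (rule LIMSEQ_inverse_real_of_nat)
  ultimately have L2: "(\<lambda>n. (Gamma (1 + h n) - Gamma 1) / h n) \<longlonglongrightarrow> (- euler_mascheroni :: real)"
    by blast
  have "integral\<^sup>L lborel (s n) = (Gamma (1 + h n) - Gamma 1) / h n" for n
    using sI[of n] by (rule has_bochner_integral_integral_eq)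
  with L1 have "(\<lambda>n. (Gamma (1 + h n) - Gamma 1) / h n) \<longlonglongrightarrow> integral\<^sup>L lborel f" by simp
  from LIMSEQ_unique[OF this L2] have "integral\<^sup>L lborel f = - euler_mascheroni" .
  then show ?thesis using fint unfolding f_def E_def by (simp add: has_bochner_integral_iff)
qed



lemma ln_exp_integral:
  fixes t :: real assumes t: "t > 0"
  shows "has_bochner_integral lborel (\<lambda>y::real. indicator {0<..} y * (ln y * exp (-(t*y)))) (-(euler_mascheroni + ln t) / t)"
proof -
  define F where "F = (\<lambda>y::real. indicator {0<..} y * (ln y * exp (-(t*y))) :: real)"
  have g1: "has_bochner_integral lborel (\<lambda>x::real. indicator {0<..} x * (x powr (1 - 1) / exp x)) 1"
    using gamma_lborel[of 1] by simp
  have eqG: "(\<lambda>x. F (0 + (1/t) * x)) = (\<lambda>x. indicator {0<..} x * (ln x * exp (-x)) - ln t * (indicator {0<..} x * (x powr (1 - 1) / exp x)))"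
  proof
    fix x :: real
    show "F (0 + (1/t) * x) = indicator {0<..} x * (ln x * exp (-x)) - ln t * (indicator {0<..} x * (x powr (1 - 1) / exp x))"
    proof (cases "x > 0")
      case True
      then have "ln (x / t) = ln x - ln t" using t by (simp add: ln_div)
      then show ?thesis using True t by (simp add: F_def indicator_def exp_minus field_simps)
    next
      case False
      then show ?thesis using t by (simp add: F_def indicator_def divide_pos_pos zero_less_divide_iff not_less)
    qed
  qed
  have G: "has_bochner_integral lborel (\<lambda>x. F (0 + (1/t) * x)) (- euler_mascheroni - ln t * 1)"
    unfolding eqG by (intro has_bochner_integral_diff has_bochner_integral_mult_right ln_exp_integral1 g1)
  have Fi: "integrable lborel F"
    using lborel_integrable_real_affine_iff[where c="1/t" and t=0 and f=F] integrable.intros[OF G] t by simp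
  have "integral\<^sup>L lborel F = \<bar>1/t\<bar> *\<^sub>R integral\<^sup>L lborel (\<lambda>x. F (0 + (1/t) * x))"
    using t by (intro lborel_integral_real_affine) simp
  also have "\<dots> = (-(euler_mascheroni + ln t) / t)"
    using G t by (simp add: has_bochner_integral_integral_eq field_simps)
  finally show ?thesis using Fi unfolding F_def by (simp add: has_bochner_integral_iff)
qed



lemma exp_hbi:
  fixes u :: real assumes u: "u > 0"
  shows "has_bochner_integral lborel (\<lambda>x::real. indicator {0<..} x * exp (-(x*u))) (1/u)"
proof -
  have i: "integrable lborel (\<lambda>x::real. indicator {0<..} x * exp (-(x*u)))"
    using integrable_I0i_exp_mscale[OF u] by (simp add: set_integrable_def)
  have "integral\<^sup>L lborel (\<lambda>x::real. indicator {0<..} x * exp (-(x*u))) = 1/u"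
    using LBINT_I0i_exp_mscale[OF u] by (simp add: interval_lebesgue_integral_0_infty set_lebesgue_integral_def)
  with i show ?thesis by (simp add: has_bochner_integral_iff)
qed

lemma neg_ln_tanh_sums:
  fixes y :: real assumes y: "y > 0"
  shows "(\<lambda>n. ((exp (-(2*y)))^n - (-(exp (-(2*y))))^n) / real n) sums (- ln (tanh y))"
proof -
  define q where "q = exp (-(2*y))"
  have q0: "0 < q" and q1: "q < 1" using y by (auto simp: q_def)
  have s1: "(\<lambda>n. - ((-q)^n) / of_nat n) sums ln (1 + q)" using q0 q1 by (intro ln_series') auto
  have s2: "(\<lambda>n. - ((-(-q))^n) / of_nat n) sums ln (1 + (-q))" using q0 q1 by (intro ln_series') auto
  have "(\<lambda>n. - ((-q)^n) / of_nat n - (- ((-(-q))^n) / of_nat n)) sums (ln (1 + q) - ln (1 + (-q)))"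
    by (rule sums_diff[OF s1 s2])
  moreover have "tanh y = (1 - q) / (1 + q)" by (simp add: tanh_real_altdef q_def)
  moreover have "ln ((1 - q) / (1 + q)) = ln (1 - q) - ln (1 + q)" using q0 q1 by (simp add: ln_div)
  ultimately have "(\<lambda>n. (q^n - (-q)^n) / real n) sums (- ln (tanh y))"
    by (simp add: diff_divide_distrib)
  then show ?thesis by (simp only: q_def)
qed

lemma c_nonneg:
  fixes q :: real assumes "q \<ge> 0"
  shows "0 \<le> (q^n - (-q)^n) / real n"
proof -
  have "(-q)^n \<le> \<bar>(-q)^n\<bar>" by (rule abs_ge_self)
  also have "\<dots> = q^n" using assms by (simp add: power_abs)
  finally show ?thesis by simp
qed

lemma b_sums:
  fixes t :: real assumes t: "t > 0"
  shows "(\<lambda>n. (1 - (-1)^n) / real n * (1 / (t + 2 * real n))) sums ((Digamma (t/4+1/2) + euler_mascheroni + 2 * ln 2) / t)"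
proof -
  define b where "b = (\<lambda>n. (1 - (-1)^n) / real n * (1 / (t + 2 * real n)))"
  have "(\<lambda>k. inverse (1/2 + real k) - inverse ((t/4+1/2) + real k)) sums (Digamma (t/4+1/2) - Digamma (1/2))"
    using t by (intro Digamma_diff_sums) auto
  then have "(\<lambda>k. (inverse (1/2 + real k) - inverse ((t/4+1/2) + real k)) / t) sums ((Digamma (t/4+1/2) - Digamma (1/2)) / t)"
    by (rule sums_divide)
  moreover have "(inverse (1/2 + real k) - inverse ((t/4+1/2) + real k)) / t = b (2*k+1)" for k
  proof -
    have m1: "(-1::real)^(2*k+1) = -1" by simp
    have pos: "1/2 + real k > 0" "t/4+1/2 + real k > 0" "t + 2 * real (2*k+1) > 0" "real (2*k+1) > 0" using t by auto
    have e1: "inverse (1/2 + real k) = 2 / (2 * real k + 1)" by (simp add: field_simps)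
    have e2: "inverse (t/4+1/2 + real k) = 4 / (t + 4 * real k + 2)" using t by (simp add: field_simps)
    have "(2 / (2 * real k + 1) - 4 / (t + 4 * real k + 2)) = 2 * t / ((2 * real k + 1) * (t + 4 * real k + 2))"
      using t by (simp add: field_simps)
    then have "(inverse (1/2 + real k) - inverse ((t/4+1/2) + real k)) / t = 2 / ((2 * real k + 1) * (t + 4 * real k + 2))"
      using t by (simp add: e1 e2)
    also have "\<dots> = b (2*k+1)" unfolding b_def using m1 by (simp add: algebra_simps)
    finally show ?thesis .
  qed
  ultimately have "(\<lambda>k. b (2*k+1)) sums ((Digamma (t/4+1/2) - Digamma (1/2)) / t)" by simp
  then have "(\<lambda>k. b (2*k+1)) sums ((Digamma (t/4+1/2) + euler_mascheroni + 2 * ln 2) / t)"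
  proof -
    assume that: "(\<lambda>k. b (2*k+1)) sums ((Digamma (t/4+1/2) - Digamma (1/2)) / t)"
    have "Digamma (t/4+1/2) - Digamma (1/2) = Digamma (t/4+1/2) + euler_mascheroni + 2 * ln (2::real)"
      by (simp add: Digamma_one_half)
    then show ?thesis using that by (metis add.assoc)
  qed
  moreover have "strict_mono (\<lambda>k::nat. 2*k+1)" by (simp add: strict_mono_def)
  moreover have "b n = 0" if "n \<notin> range (\<lambda>k::nat. 2*k+1)" for n
  proof -
    have "even n" using that by (metis oddE rangeI)
    then show ?thesis by (simp add: b_def)
  qed
  ultimately show ?thesis unfolding b_def[symmetric]
    using sums_mono_reindex[of "\<lambda>k::nat. 2*k+1" b] by blast
qed



lemma tanh_integral:
  fixes t :: real assumes t: "t > 0"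
  shows "has_bochner_integral lborel (\<lambda>y::real. indicator {0<..} y * (- ln (tanh y) * exp (-(t*y))))
           ((Digamma (t/4+1/2) + euler_mascheroni + 2 * ln 2) / t)"
proof -
  define c where "c = (\<lambda>n (y::real). ((exp (-(2*y)))^n - (-(exp (-(2*y))))^n) / real n)"
  define b where "b = (\<lambda>n. (1 - (-1)^n) / real n * (1 / (t + 2 * real n)))"
  define T where "T = (\<lambda>n (y::real). indicator {0<..} y * (c n y * exp (-(t*y))) :: real)"
  define S where "S = (Digamma (t/4+1/2) + euler_mascheroni + 2 * ln 2) / t"
  define u where "u = (\<lambda>y::real. indicator {0<..} y * (- ln (tanh y) * exp (-(t*y))) :: real)"
  have Teq: "T n y = ((1 - (-1)^n) / real n) * (indicator {0<..} y * exp (-(y * (t + 2 * real n))))" for n y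
  proof -
    have q1: "(exp (-(2*y)))^n = exp (real n * (-(2*y)))" by (rule exp_of_nat_mult[symmetric])
    have q2: "(-(exp (-(2*y))))^n = (-1)^n * exp (real n * (-(2*y)))"
      using power_minus[of "exp (-(2*y))" n] q1 by simp
    have gen: "(Q - a * Q) / r = (1 - a) / r * Q" for Q a r :: real
      by (simp add: left_diff_distrib times_divide_eq_left)
    have "c n y = (1 - (-1)^n) / real n * exp (real n * (-(2*y)))"
      unfolding c_def q1 q2 by (rule gen)
    moreover have "exp (real n * (-(2*y))) * exp (-(t*y)) = exp (-(y * (t + 2 * real n)))"
    proof -
      have "real n * (-(2*y)) + (-(t*y)) = -(y * (t + 2 * real n))" by (simp add: algebra_simps)
      then show ?thesis by (metis exp_add)
    qed
    ultimately show ?thesis unfolding T_def by (simp add: mult_ac)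
  qed
  have Tint: "has_bochner_integral lborel (T n) (b n)" for n
  proof -
    have "t + 2 * real n > 0" using t by simp
    from has_bochner_integral_mult_right[OF exp_hbi[OF this], of "(1 - (-1)^n) / real n"]
    show ?thesis unfolding b_def by (simp add: Teq[abs_def])
  qed
  define f where "f = (\<lambda>N y. \<Sum>n<N. T n y)"
  have fint: "has_bochner_integral lborel (f N) (\<Sum>n<N. b n)" for N
    unfolding f_def by (intro has_bochner_integral_sum Tint)
  have Tpos: "0 \<le> T n y" for n y
    unfolding T_def c_def by (intro mult_nonneg_nonneg c_nonneg) auto
  have "integrable lborel u \<and> integral\<^sup>L lborel u = S"
  proof (intro conjI)
    have i: "\<And>i. integrable lborel (f i)" using fint by (auto intro: integrable.intros)
    have mono: "AE x in lborel. mono (\<lambda>n. f n x)"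
      by (intro AE_I2 incseq_SucI) (simp add: f_def Tpos)
    have pos: "\<And>i. AE x in lborel. 0 \<le> f i x"
      by (intro AE_I2) (simp add: f_def Tpos sum_nonneg)
    have lim: "AE x in lborel. (\<lambda>i. f i x) \<longlonglongrightarrow> u x"
    proof (intro AE_I2)
      fix y :: real
      show "(\<lambda>i. f i y) \<longlonglongrightarrow> u y"
      proof (cases "y > 0")
        case True
        have "(\<lambda>n. c n y) sums (- ln (tanh y))" unfolding c_def by (rule neg_ln_tanh_sums[OF True])
        then have "(\<lambda>N. \<Sum>n<N. c n y) \<longlonglongrightarrow> - ln (tanh y)" by (simp add: sums_def)
        then have "(\<lambda>N. (\<Sum>n<N. c n y) * exp (-(t*y))) \<longlonglongrightarrow> - ln (tanh y) * exp (-(t*y))"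
          by (intro tendsto_intros)
        moreover have "(\<lambda>i. f i y) = (\<lambda>N. (\<Sum>n<N. c n y) * exp (-(t*y)))"
          using True unfolding f_def T_def by (simp add: sum_distrib_right)
        moreover have "u y = - ln (tanh y) * exp (-(t*y))" using True by (simp add: u_def)
        ultimately show ?thesis by simp
      qed (simp add: f_def T_def u_def)
    qed
    have ilim: "(\<lambda>i. integral\<^sup>L lborel (f i)) \<longlonglongrightarrow> S"
    proof -
      have "b sums S" unfolding b_def S_def by (rule b_sums[OF t])
      then have "(\<lambda>N. \<Sum>n<N. b n) \<longlonglongrightarrow> S" by (simp add: sums_def)
      moreover have "integral\<^sup>L lborel (f N) = (\<Sum>n<N. b n)" for N
        using fint[of N] by (rule has_bochner_integral_integral_eq)
      ultimately show ?thesis by simp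
    qed
    have tm: "(tanh :: real \<Rightarrow> real) \<in> borel_measurable borel"
      by (rule borel_measurable_continuous_onI) (auto intro!: continuous_intros)
    have em: "(\<lambda>x::real. exp (- (t * x))) \<in> borel_measurable borel"
      by (rule borel_measurable_continuous_onI) (auto intro!: continuous_intros)
    have um: "u \<in> borel_measurable lborel" unfolding u_def using tm em by measurable
    show "integrable lborel u" by (rule integral_monotone_convergence_nonneg(1)[OF i mono pos lim ilim um])
    show "integral\<^sup>L lborel u = S" by (rule integral_monotone_convergence_nonneg(2)[OF i mono pos lim ilim um])
  qed
  then show ?thesis unfolding u_def S_def by (simp add: has_bochner_integral_iff)
qed



lemma real_main:
  fixes t :: real assumes t: "t > 0"
  shows "has_bochner_integral lborel (\<lambda>y::real. indicator {0<..} y * (ln (phiT y) * exp (-(t*y))))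
           ((ln (t/4) - Digamma (t/4+1/2)) / t)"
proof -
  have h: "has_bochner_integral lborel (\<lambda>y::real. - (indicator {0<..} y * (- ln (tanh y) * exp (-(t*y)))) - indicator {0<..} y * (ln y * exp (-(t*y))))
           (- ((Digamma (t/4+1/2) + euler_mascheroni + 2 * ln 2) / t) - (-(euler_mascheroni + ln t) / t))"
    by (intro has_bochner_integral_diff has_bochner_integral_minus tanh_integral ln_exp_integral t)
  have eq: "(\<lambda>y::real. - (indicator {0<..} y * (- ln (tanh y) * exp (-(t*y)))) - indicator {0<..} y * (ln y * exp (-(t*y))))
          = (\<lambda>y::real. indicator {0<..} y * (ln (phiT y) * exp (-(t*y))))"
  proof
    fix y :: real
    show "- (indicator {0<..} y * (- ln (tanh y) * exp (-(t*y)))) - indicator {0<..} y * (ln y * exp (-(t*y)))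
          = indicator {0<..} y * (ln (phiT y) * exp (-(t*y)))"
    proof (cases "y > 0")
      case True
      then have "ln (phiT y) = ln (tanh y) - ln y" by (simp add: phiT_def ln_div)
      then show ?thesis using True by (simp add: indicator_def left_diff_distrib)
    qed simp
  qed
  have v: "- ((Digamma (t/4+1/2) + euler_mascheroni + 2 * ln 2) / t) - (-(euler_mascheroni + ln t) / t)
          = (ln (t/4) - Digamma (t/4+1/2)) / t"
  proof -
    have l4: "ln (4::real) = 2 * ln 2" using ln_realpow[of 2 2] by simp
    have e: "ln (t/4) + 2 * ln 2 = ln t" using t l4 by (simp add: ln_div)
    have "- ((Digamma (t/4+1/2) + euler_mascheroni + 2 * ln 2) / t) - (-(euler_mascheroni + ln t) / t)
          = ((euler_mascheroni + ln t) - (Digamma (t/4+1/2) + euler_mascheroni + 2 * ln 2)) / t"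
      by (simp add: diff_divide_distrib add_divide_distrib)
    also have "(euler_mascheroni + ln t) - (Digamma (t/4+1/2) + euler_mascheroni + 2 * ln 2) = ln (t/4) - Digamma (t/4+1/2)"
      using e by simp
    finally show ?thesis .
  qed
  show ?thesis using h unfolding eq v .
qed

theorem corollary4:
  fixes L :: "real \<Rightarrow> complex"
  assumes L_cont: "continuous_on UNIV L"
    and L_0: "L 0 = 0"
    and L_log: "\<And>s. exp (L s) = complex_of_real (phiT s)"
  shows "(\<forall>t>0.
            set_integrable lborel {0<..} (\<lambda>s. cnj (L s) * complex_of_real (exp (- (t * s)))) \<and>
            V_free L t = \<i> * complex_of_real (t * (ln (t / 2) - betaF (t / 2) - Digamma (t / 2))) \<and>
            V_free L t = \<i> * complex_of_real (t * (ln (t / 4) - Digamma (t / 4 + 1 / 2))))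
       \<and> (\<forall>s>0. 2 * Digamma (2 * s) - Digamma s - Digamma (s + 1 / 2) = 2 * ln (2::real))"
proof (intro conjI allI impI)
  fix x :: real assume "x > 0"
  then show "2 * Digamma (2 * x) - Digamma x - Digamma (x + 1 / 2) = 2 * ln (2::real)"
    by (rule Digamma_dup)
next
  fix t :: real assume t: "t > 0"
  have Lr: "L y = complex_of_real (ln (phiT y))" for y
    by (rule L_real[OF L_cont L_0 L_log])
  have feq: "(\<lambda>x. indicator {0<..} x *\<^sub>R (cnj (L x) * complex_of_real (exp (- (t * x)))))
      = (\<lambda>x. complex_of_real (indicator {0<..} x * (ln (phiT x) * exp (-(t*x)))))"
    by (auto simp: Lr fun_eq_iff indicator_def)
  have hc: "has_bochner_integral lborel (\<lambda>x. indicator {0<..} x *\<^sub>R (cnj (L x) * complex_of_real (exp (- (t * x)))))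
             (complex_of_real ((ln (t/4) - Digamma (t/4+1/2)) / t))"
    unfolding feq by (rule has_bochner_integral_of_real[OF real_main[OF t]])
  show si: "set_integrable lborel {0<..} (\<lambda>s. cnj (L s) * complex_of_real (exp (- (t * s))))"
    unfolding set_integrable_def using hc by (auto intro: integrable.intros)
  have I: "(LINT s:{0<..}|lborel. cnj (L s) * complex_of_real (exp (- (t * s)))) = complex_of_real ((ln (t/4) - Digamma (t/4+1/2)) / t)"
    unfolding set_lebesgue_integral_def using hc by (rule has_bochner_integral_integral_eq)
  have V: "V_free L t = \<i> * complex_of_real (t * (ln (t / 4) - Digamma (t / 4 + 1 / 2)))"
    unfolding V_free_def I using t by (simp add: power2_eq_square field_simps)
  then show "V_free L t = \<i> * complex_of_real (t * (ln (t / 4) - Digamma (t / 4 + 1 / 2)))" .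
  have "ln (t / 2) - betaF (t / 2) - Digamma (t / 2) = ln (t / 4) - Digamma (t / 4 + 1 / 2)"
  proof -
    have b: "betaF (t/2) = (Digamma (t/4 + 1/2) - Digamma (t/4)) / 2"
      using betaF_Digamma[of "t/2"] t by (simp add: add_divide_distrib)
    have d: "2 * Digamma (2 * (t/4)) - Digamma (t/4) - Digamma (t/4 + 1 / 2) = 2 * ln (2::real)"
      using t by (intro Digamma_dup) simp
    have l4: "ln (4::real) = 2 * ln 2" using ln_realpow[of 2 2] by simp
    have "ln (t/2) = ln (t/4) + ln 2" using t l4 by (simp add: ln_div)
    then show ?thesis using b d by simp
  qed
  then show "V_free L t = \<i> * complex_of_real (t * (ln (t / 2) - betaF (t / 2) - Digamma (t / 2)))"
    using V by simp
qed

end
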